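(* Let $\mathcal{X} = \{x_1, \dots, x_N\}$ be a finite set and let $P_{\mathrm{coor}}$ be a symmetric joint probability distribution on $\mathcal{X} \times \mathcal{X}$ with marginal $P(x) = \sum_{x'} P_{\mathrm{coor}}(x, x')$, and assume $P_{\mathrm{coor}}(x_i,x_j) > 0$ for all $i,j$. Let $K \in \mathbb{R}^{N\times N}$ be the PMI matrix $K_{ij} = \log \frac{P_{\mathrm{coor}}(x_i, x_j)}{P(x_i)P(x_j)}$. Suppose there are $\rho_{\min} > 0$ and $\delta \ge 0$ with $[\log \rho_{\min}, \log \rho_{\min} + \delta] \subseteq (-\infty, 0]$ such that every off-diagonal entry satisfies $\log \rho_{\min} \le K_{ij} \le \log \rho_{\min} + \delta$ for $i \ne j$. If $$\frac{P_{\mathrm{coor}}(x_i, x_i)}{P(x_i)^2} \ge e^{N\delta} \rho_{\min} \quad \text{for all } i = 1,\dots,N,$$ then there exists a constant $C \in \mathbb{R}$ such that the matrix $K + C\,\mathbf{1}\mathbf{1}^\top$ (i.e. $C$ added to every entry of $K$) is positive semi-definite. Consequently there is a map $f : \mathcal{X} \to \mathbb{R}^N$ with $\langle f(x_a), f(x_b)\rangle = K_{\mathrm{PMI}}(x_a, x_b) + C$ for all $x_a, x_b \in \mathcal{X}$.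
   Context: $K_{\mathrm{PMI}}(x_a,x_b) = \log \frac{P_{\mathrm{coor}}(x_a, x_b)}{P(x_a)P(x_b)}$ denotes the pointwise mutual information kernel of the cooccurrence distribution $P_{\mathrm{coor}}$; $\mathbf{1}$ is the all-ones vector in $\mathbb{R}^N$. *)

theory Defs
  imports "HOL-Analysis.Analysis"
begin

definition marginal :: "('a::finite \<Rightarrow> 'a \<Rightarrow> real) \<Rightarrow> 'a \<Rightarrow> real" where
  "marginal Pc x = (\<Sum>x'\<in>UNIV. Pc x x')"

definition pmi_kernel :: "('a::finite \<Rightarrow> 'a \<Rightarrow> real) \<Rightarrow> 'a \<Rightarrow> 'a \<Rightarrow> real" where
  "pmi_kernel Pc a b = ln (Pc a b / (marginal Pc a * marginal Pc b))"

definition psd_matrix :: "('a::finite \<Rightarrow> 'a \<Rightarrow> real) \<Rightarrow> bool" where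
  "psd_matrix M \<longleftrightarrow> (\<forall>i j. M i j = M j i) \<and>
     (\<forall>v :: 'a \<Rightarrow> real. 0 \<le> (\<Sum>i\<in>UNIV. \<Sum>j\<in>UNIV. v i * M i j * v j))"

end

theory Submission
  imports Defs
begin

definition qf :: "'a set \<Rightarrow> ('a \<Rightarrow> 'a \<Rightarrow> real) \<Rightarrow> ('a \<Rightarrow> real) \<Rightarrow> real" where
  "qf S M v = (\<Sum>i\<in>S. \<Sum>j\<in>S. v i * M i j * v j)"

lemma qf_insert:
  assumes "finite S" "k \<notin> S" "\<And>i j. M i j = M j i"
  shows "qf (insert k S) M w = w k * w k * M k k + 2 * w k * (\<Sum>j\<in>S. M k j * w j) + qf S M w"
proof -
  have "qf (insert k S) M w = (\<Sum>j\<in>insert k S. w k * M k j * w j) + (\<Sum>i\<in>S. \<Sum>j\<in>insert k S. w i * M i j * w j)"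
    unfolding qf_def using assms by simp
  also have "(\<Sum>j\<in>insert k S. w k * M k j * w j) = w k * M k k * w k + (\<Sum>j\<in>S. w k * M k j * w j)"
    using assms by simp
  also have "(\<Sum>i\<in>S. \<Sum>j\<in>insert k S. w i * M i j * w j) = (\<Sum>i\<in>S. w i * M i k * w k) + qf S M w"
    unfolding qf_def using assms by (simp add: sum.distrib)
  also have "(\<Sum>i\<in>S. w i * M i k * w k) = w k * (\<Sum>j\<in>S. M k j * w j)"
    by (simp add: sum_distrib_left assms(3)[of _ k] mult_ac)
  also have "(\<Sum>j\<in>S. w k * M k j * w j) = w k * (\<Sum>j\<in>S. M k j * w j)"
    by (simp add: sum_distrib_left mult_ac)
  finally show ?thesis by (simp add: algebra_simps)
qed

lemma qf_cong: "(\<And>i. i \<in> S \<Longrightarrow> v i = w i) \<Longrightarrow> qf S M v = qf S M w"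
  unfolding qf_def by (intro sum.cong refl) auto

lemma zero_diag:
  assumes "finite S" "k \<notin> S" "\<And>i j. M i j = M j i" "\<forall>v. 0 \<le> qf (insert k S) M v"
    "M k k = 0" "i \<in> S"
  shows "M i k = 0"
proof (rule ccontr)
  assume ne: "M i k \<noteq> 0"
  define t where "t = - (M i i + 1) / (2 * M i k)"
  define w where "w = (\<lambda>x. if x = k then t else if x = i then 1 else (0::real))"
  have ik: "i \<noteq> k" using assms(2,6) by auto
  have wS: "\<And>j. j \<in> S \<Longrightarrow> w j = (if j = i then 1 else 0)"
    using assms(2) unfolding w_def by auto
  have s1: "(\<Sum>j\<in>S. M k j * w j) = M k i"
  proof -
    have "(\<Sum>j\<in>S. M k j * w j) = (\<Sum>j\<in>S. if j = i then M k j else 0)"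
      by (rule sum.cong) (simp_all add: wS)
    also have "\<dots> = M k i" using assms(1,6) by (simp add: sum.delta')
    finally show ?thesis .
  qed
  have s2: "qf S M w = M i i"
  proof -
    have t: "\<And>a b. a \<in> S \<Longrightarrow> b \<in> S \<Longrightarrow> w a * M a b * w b = (if a = i then (if b = i then M i i else 0) else 0)"
      by (simp add: wS)
    have "qf S M w = (\<Sum>i'\<in>S. if i' = i then (\<Sum>j\<in>S. if j = i then M i i else 0) else 0)"
      unfolding qf_def by (intro sum.cong refl) (simp add: t)
    also have "\<dots> = M i i" using assms(1,6) by (simp add: sum.delta')
    finally show ?thesis .
  qed
  have "qf (insert k S) M w = 2 * t * M i k + M i i"
    using qf_insert[OF assms(1,2), where M=M, OF assms(3), where w=w] s1 s2 assms(5) assms(3)[of k i] by (simp add: w_def)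
  also have "\<dots> = -1" using ne by (simp add: t_def field_simps)
  finally show False using assms(4) by (metis neg_0_le_iff_le not_one_le_zero)
qed

lemma gram_aux:
  fixes S :: "'a::finite set" and M :: "'a \<Rightarrow> 'a \<Rightarrow> real"
  assumes "finite S" "\<And>i j. M i j = M j i" "\<forall>v. 0 \<le> qf S M v"
  shows "\<exists>f::'a \<Rightarrow> real^'a. (\<forall>i\<in>S. \<forall>j\<in>S. inner (f i) (f j) = M i j) \<and> (\<forall>i c. c \<notin> S \<longrightarrow> f i $ c = 0)"
  using assms
proof (induction S arbitrary: M rule: finite_induct)
  case empty
  then show ?case by (intro exI[of _ "\<lambda>_. 0"]) auto
next
  case (insert k S)
  note fin = insert(1) and kS = insert(2) and sym = insert.prems(1) and psd = insert.prems(2)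
  define M' where "M' = (\<lambda>i j. M i j - M i k * M k j / M k k)"
  have symM': "\<And>i j. M' i j = M' j i" unfolding M'_def using sym by (metis mult.commute)
  have psd': "\<forall>v. 0 \<le> qf S M' v"
  proof
    fix v
    define b where "b = (\<Sum>j\<in>S. M k j * v j)"
    define w where "w = v(k := - b / M k k)"
    have wb: "(\<Sum>j\<in>S. M k j * w j) = b" unfolding b_def w_def using kS
      by (intro sum.cong) auto
    have qw: "qf S M w = qf S M v" using kS by (intro qf_cong) (auto simp: w_def)
    have "qf S M' v = qf S M v - (\<Sum>i\<in>S. \<Sum>j\<in>S. v i * M i k * M k j * v j / M k k)"
    proof -
      have e: "\<And>i j. v i * M' i j * v j = v i * M i j * v j - v i * M i k * M k j * v j / M k k"
        by (simp add: M'_def field_simps)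
      show ?thesis unfolding qf_def by (simp only: e sum_subtractf)
    qed
    also have "(\<Sum>i\<in>S. \<Sum>j\<in>S. v i * M i k * M k j * v j / M k k) = b * b / M k k"
    proof -
      have b2: "(\<Sum>i\<in>S. v i * M i k) = b" unfolding b_def
        by (rule sum.cong) (simp_all add: sym[of _ k] mult.commute)
      have "b * b / M k k = (\<Sum>i\<in>S. \<Sum>j\<in>S. (v i * M i k) * (M k j * v j)) / M k k"
      proof -
        have "b * b = (\<Sum>i\<in>S. v i * M i k) * (\<Sum>j\<in>S. M k j * v j)" using b2 b_def by simp
        then show ?thesis by (simp only: sum_product)
      qed
      also have "\<dots> = (\<Sum>i\<in>S. \<Sum>j\<in>S. v i * M i k * M k j * v j / M k k)"
        by (simp only: sum_divide_distrib mult.assoc)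
      finally show ?thesis by simp
    qed
    finally have "qf S M' v = qf S M v - b * b / M k k" .
    moreover have "qf (insert k S) M w = qf S M v - b * b / M k k"
      using qf_insert[OF fin kS, where M=M, OF sym, where w=w] wb qw
      by (cases "M k k = 0") (auto simp: w_def field_simps power2_eq_square)
    ultimately show "0 \<le> qf S M' v" using psd by metis
  qed
  obtain g :: "'a \<Rightarrow> real^'a" where g1: "\<forall>i\<in>S. \<forall>j\<in>S. inner (g i) (g j) = M' i j"
    and g2: "\<forall>i c. c \<notin> S \<longrightarrow> g i $ c = 0"
    using insert.IH[OF symM' psd'] by blast
  have Mkk: "M k k \<ge> 0"
  proof -
    have "qf (insert k S) M (\<lambda>x. if x = k then 1 else 0) = M k k"
      using qf_insert[OF fin kS, where M=M, OF sym, where w="\<lambda>x. if x = k then 1 else 0"] kS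
      by (simp add: qf_def if_distrib sum.If_cases cong: if_cong)
    then show ?thesis using psd by metis
  qed
  define e :: "real^'a" where "e = axis k 1"
  define f where "f = (\<lambda>i. if i = k then sqrt (M k k) *\<^sub>R e else g i + (M i k / sqrt (M k k)) *\<^sub>R e)"
  have ge: "\<And>i. inner (g i) e = 0" unfolding e_def using g2 kS by (simp add: inner_axis)
  have ge': "\<And>i. inner e (g i) = 0" using ge by (simp add: inner_commute)
  have ee: "inner e e = 1" unfolding e_def by (simp add: inner_axis_axis)
  have zk: "\<And>i. i \<in> S \<Longrightarrow> M i k = M i k / sqrt (M k k) * sqrt (M k k)"
  proof -
    fix i assume i: "i \<in> S"
    show "M i k = M i k / sqrt (M k k) * sqrt (M k k)"
    proof (cases "M k k = 0")
      case True
      then show ?thesis using zero_diag[OF fin kS sym psd True i] by simp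
    next
      case False
      then show ?thesis using Mkk by simp
    qed
  qed
  have "\<forall>i\<in>insert k S. \<forall>j\<in>insert k S. inner (f i) (f j) = M i j"
  proof (intro ballI)
    fix i j assume i: "i \<in> insert k S" and j: "j \<in> insert k S"
    have sq: "sqrt (M k k) * sqrt (M k k) = M k k" using Mkk by simp
    show "inner (f i) (f j) = M i j"
    proof (cases "i = k")
      case True
      show ?thesis
      proof (cases "j = k")
        case True
        then show ?thesis using \<open>i = k\<close> using Mkk by (simp add: f_def ee sq)
      next
        case False
        then have "j \<in> S" using j by auto
        have "inner (f i) (f j) = sqrt (M k k) * (M j k / sqrt (M k k))"
          using \<open>i = k\<close> False by (simp add: f_def inner_add_right ge' ee)
        then show ?thesis using zk[of j] sym[of k j] \<open>j \<in> S\<close> \<open>i = k\<close> by (simp add: mult.commute)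
      qed
    next
      case False
      then have iS: "i \<in> S" using i by auto
      show ?thesis
      proof (cases "j = k")
        case True
        have "inner (f i) (f j) = (M i k / sqrt (M k k)) * sqrt (M k k)"
          using True False by (simp add: f_def inner_add_left ge ee)
        then show ?thesis using zk[of i] iS True by simp
      next
        case jk: False
        then have jS: "j \<in> S" using j by auto
        have "inner (f i) (f j) = M' i j + M i k / sqrt (M k k) * (M j k / sqrt (M k k))"
          using False jk g1 iS jS
          by (simp add: f_def inner_add_left inner_add_right ge ge' ee)
        also have "\<dots> = M i j"
          unfolding M'_def using Mkk sym[of j k] by (cases "M k k = 0") (auto simp: field_simps)
        finally show ?thesis .
      qed
    qed
  qed
  moreover have "\<forall>i c. c \<notin> insert k S \<longrightarrow> f i $ c = 0"
    using g2 by (auto simp: f_def e_def axis_def)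
  ultimately show ?case by blast
qed

lemma offdiag_bound:
  fixes m d x y :: real
  assumes "0 \<le> m" "m \<le> d"
  shows "x * m * y \<ge> - d * (x*x + y*y) / 2"
proof -
  have h1: "0 \<le> m * ((x+y)*(x+y))" using assms by simp
  have h2: "0 \<le> (d-m)*(x*x+y*y)" using assms by simp
  have e1: "m * ((x+y)*(x+y)) = m*(x*x) + 2*(x*m*y) + m*(y*y)" by (simp add: algebra_simps)
  have e2: "(d-m)*(x*x+y*y) = d*(x*x+y*y) - m*(x*x) - m*(y*y)" by (simp add: algebra_simps)
  have e3: "- d * (x*x + y*y) / 2 = - (d*(x*x+y*y)) / 2" by simp
  show ?thesis unfolding e3 using h1 h2 e1 e2 by linarith
qed

theorem mainTheorem1:
  fixes Pc :: "'a::finite \<Rightarrow> 'a \<Rightarrow> real"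
    and \<rho>min \<delta> :: real
  assumes sym: "\<And>x y. Pc x y = Pc y x"
    and pos: "\<And>x y. Pc x y > 0"
    and total: "(\<Sum>x\<in>UNIV. \<Sum>y\<in>UNIV. Pc x y) = 1"
    and rho_pos: "\<rho>min > 0"
    and delta_nonneg: "\<delta> \<ge> 0"
    and interval_nonpos: "ln \<rho>min + \<delta> \<le> 0"
    and offdiag: "\<And>i j. i \<noteq> j \<Longrightarrow>
        ln \<rho>min \<le> pmi_kernel Pc i j \<and> pmi_kernel Pc i j \<le> ln \<rho>min + \<delta>"
    and diag: "\<And>i. Pc i i / (marginal Pc i)^2 \<ge> exp (real CARD('a) * \<delta>) * \<rho>min"
  shows "\<exists>C::real. psd_matrix (\<lambda>i j. pmi_kernel Pc i j + C) \<and>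
           (\<exists>f :: 'a \<Rightarrow> real ^ 'a. \<forall>a b. inner (f a) (f b) = pmi_kernel Pc a b + C)"
proof -
  define a where "a = ln \<rho>min"
  define M where "M = (\<lambda>i j. pmi_kernel Pc i j + - a)"
  define N where "N = real CARD('a)"
  have symM: "\<And>i j. M i j = M j i"
    unfolding M_def pmi_kernel_def using sym by (simp add: mult.commute)
  have mpos: "\<And>i. marginal Pc i > 0"
    unfolding marginal_def using pos by (simp add: sum_pos)
  have dg: "\<And>i. M i i \<ge> N * \<delta>"
  proof -
    fix i
    have p: "0 < exp (N * \<delta>) * \<rho>min" using rho_pos by simp
    have "ln (exp (N * \<delta>) * \<rho>min) \<le> ln (Pc i i / (marginal Pc i * marginal Pc i))"
      using diag[of i] p by (simp add: N_def power2_eq_square)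
    moreover have "ln (exp (N * \<delta>) * \<rho>min) = N * \<delta> + a"
      using rho_pos by (simp add: ln_mult a_def)
    ultimately show "M i i \<ge> N * \<delta>" by (simp add: M_def pmi_kernel_def)
  qed
  have od: "\<And>i j. i \<noteq> j \<Longrightarrow> 0 \<le> M i j \<and> M i j \<le> \<delta>"
    using offdiag unfolding M_def a_def by fastforce
  have pt: "\<And>v i j. v i * M i j * v j \<ge> - \<delta> * (v i * v i + v j * v j) / 2
        + (if i = j then (M i i + \<delta>) * (v i * v i) else 0)"
  proof -
    fix v :: "'a \<Rightarrow> real" and i j
    show "v i * M i j * v j \<ge> - \<delta> * (v i * v i + v j * v j) / 2
        + (if i = j then (M i i + \<delta>) * (v i * v i) else 0)"
    proof (cases "i = j")
      case True
      then show ?thesis by (simp add: algebra_simps)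
    next
      case False
      then show ?thesis using offdiag_bound[of "M i j" \<delta> "v i" "v j"] od[OF False] by simp
    qed
  qed
  have psd: "\<forall>v. 0 \<le> qf UNIV M v"
  proof
    fix v :: "'a \<Rightarrow> real"
    have A: "(\<Sum>i\<in>UNIV. \<Sum>j\<in>UNIV. - \<delta> * (v i * v i + v j * v j) / 2
        + (if i = j then (M i i + \<delta>) * (v i * v i) else 0)) \<le> qf UNIV M v"
      unfolding qf_def by (intro sum_mono pt)
    have B: "(\<Sum>i\<in>UNIV. \<Sum>j\<in>UNIV. - \<delta> * (v i * v i + v j * v j) / 2
        + (if i = j then (M i i + \<delta>) * (v i * v i) else 0)) = (\<Sum>i\<in>UNIV. \<Sum>j::'a\<in>UNIV. - \<delta> * (v i * v i) / 2)
        + (\<Sum>i::'a\<in>UNIV. \<Sum>j\<in>UNIV. - \<delta> * (v j * v j) / 2)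
        + (\<Sum>i\<in>UNIV. (M i i + \<delta>) * (v i * v i))"
    proof -
      have Bt: "\<And>i j. - \<delta> * (v i * v i + v j * v j) / 2 + (if i = j then (M i i + \<delta>) * (v i * v i) else 0)
          = - \<delta> * (v i * v i) / 2 + - \<delta> * (v j * v j) / 2 + (if i = j then (M i i + \<delta>) * (v i * v i) else 0)"
        by (simp add: field_simps)
      have Bd: "\<And>i. (\<Sum>j\<in>UNIV. (if i = j then (M i i + \<delta>) * (v i * v i) else 0)) = (M i i + \<delta>) * (v i * v i)"
        by simp
      show ?thesis by (simp only: Bt sum.distrib Bd)
    qed
    have 1: "(\<Sum>i\<in>UNIV. \<Sum>j::'a\<in>UNIV. - \<delta> * (v i * v i) / 2) = (\<Sum>i\<in>UNIV. - N * \<delta> * (v i * v i) / 2)"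
      by (simp add: N_def mult.assoc)
    have 2: "(\<Sum>i::'a\<in>UNIV. \<Sum>j\<in>UNIV. - \<delta> * (v j * v j) / 2) = (\<Sum>i\<in>UNIV. - N * \<delta> * (v i * v i) / 2)"
      by (subst sum.swap) (simp add: N_def sum_distrib_left mult.assoc)
    have C: "(\<Sum>i\<in>UNIV. - N * \<delta> * (v i * v i) / 2) + (\<Sum>i\<in>UNIV. - N * \<delta> * (v i * v i) / 2)
        + (\<Sum>i\<in>UNIV. (M i i + \<delta>) * (v i * v i)) = (\<Sum>i\<in>UNIV. (M i i + \<delta> - N * \<delta>) * (v i * v i))"
    proof -
      have "\<And>i. (M i i + \<delta> - N * \<delta>) * (v i * v i) = - N * \<delta> * (v i * v i) / 2 + - N * \<delta> * (v i * v i) / 2 + (M i i + \<delta>) * (v i * v i)"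
        by (simp add: field_simps)
      then show ?thesis by (simp only: sum.distrib)
    qed
    have D: "0 \<le> (\<Sum>i\<in>UNIV. (M i i + \<delta> - N * \<delta>) * (v i * v i))"
    proof (intro sum_nonneg)
      fix i :: 'a
      have "0 \<le> M i i + \<delta> - N * \<delta>" using dg[of i] delta_nonneg by linarith
      then show "0 \<le> (M i i + \<delta> - N * \<delta>) * (v i * v i)" by simp
    qed
    show "0 \<le> qf UNIV M v" using A B C D 1 2 by linarith
  qed
  obtain f :: "'a \<Rightarrow> real^'a" where f: "\<forall>i\<in>UNIV. \<forall>j\<in>UNIV. inner (f i) (f j) = M i j"
    using gram_aux[of UNIV M, OF _ symM psd] by auto
  have "psd_matrix M"
    unfolding psd_matrix_def using symM psd by (simp add: qf_def)
  then have P1: "psd_matrix (\<lambda>i j. pmi_kernel Pc i j + - a)" unfolding M_def .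
  have P2: "\<forall>x y. inner (f x) (f y) = pmi_kernel Pc x y + - a" using f unfolding M_def by simp
  show ?thesis
  proof (rule exI[of _ "- a"], rule conjI)
    show "psd_matrix (\<lambda>i j. pmi_kernel Pc i j + - a)" by (rule P1)
    show "\<exists>f :: 'a \<Rightarrow> real ^ 'a. \<forall>x y. inner (f x) (f y) = pmi_kernel Pc x y + - a"
      by (rule exI[of _ f], rule P2)
  qed
qed

end
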